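(* Let $G$ be a finite simple graph with no isolated vertex, and let $k$ be an integer with $2<k\leq\nu(G)$. Then $I(G)^{[k]}:I(G)^{[2]}=I(G)^{[k]}$.
   Context: Vertices of $G$ are identified with the variables of $S=K[x_1,\ldots,x_n]$ ($K$ a field), edges with degree-2 monomials. $I(G)^{[k]}$ is the ideal generated by all products $e_1\cdots e_k$ over $k$-matchings of $G$. $\nu(G)$ is the matching number of $G$. *)

theory Defs
  imports "HOL-Library.Poly_Mapping"
begin

text \<open>Polynomial ring S = K[x_v : v a vertex], as finitely supported maps from
exponent vectors to coefficients.\<close>
type_synonym ('v, 'k) mpoly = "('v \<Rightarrow>\<^sub>0 nat) \<Rightarrow>\<^sub>0 'k"

definition ideal_gen :: "'a::comm_ring_1 set \<Rightarrow> 'a set" where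
  "ideal_gen A = {(\<Sum>a\<in>F. c a * a) | F c. finite F \<and> F \<subseteq> A}"

definition colon_ideal :: "'a::comm_ring_1 set \<Rightarrow> 'a set \<Rightarrow> 'a set" where
  "colon_ideal I J = {f. \<forall>g\<in>J. f * g \<in> I}"

text \<open>Finite simple graph on vertex set UNIV of a finite type: edges are 2-element sets.\<close>
definition simple_graph :: "'v set set \<Rightarrow> bool" where
  "simple_graph E \<longleftrightarrow> (\<forall>e\<in>E. card e = 2)"

definition no_isolated_vertex :: "'v set set \<Rightarrow> bool" where
  "no_isolated_vertex E \<longleftrightarrow> (\<forall>v. \<exists>e\<in>E. v \<in> e)"

definition is_matching :: "'v set set \<Rightarrow> 'v set set \<Rightarrow> bool" where
  "is_matching E M \<longleftrightarrow> M \<subseteq> E \<and> (\<forall>e\<in>M. \<forall>f\<in>M. e \<noteq> f \<longrightarrow> e \<inter> f = {})"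

definition matching_number :: "'v set set \<Rightarrow> nat" where
  "matching_number E = Max {card M | M. is_matching E M \<and> finite M}"

definition var :: "'v \<Rightarrow> ('v, 'k::comm_ring_1) mpoly" where
  "var v = Poly_Mapping.single (Poly_Mapping.single v 1) 1"

definition edge_mono :: "'v set \<Rightarrow> ('v, 'k::comm_ring_1) mpoly" where
  "edge_mono e = (\<Prod>v\<in>e. var v)"

definition sqfree_power :: "'v set set \<Rightarrow> nat \<Rightarrow> ('v, 'k::comm_ring_1) mpoly set" where
  "sqfree_power E k = ideal_gen {(\<Prod>e\<in>M. edge_mono e) | M. is_matching E M \<and> card M = k}"

end

theory Submission
  imports Defs
begin


lemma lookup_mult_single_shift:
  fixes f :: "('a::cancel_comm_monoid_add) \<Rightarrow>\<^sub>0 ('b::comm_semiring_1)" and x m :: "'a"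
  shows "Poly_Mapping.lookup (f * Poly_Mapping.single x 1) (m + x) = Poly_Mapping.lookup f m"
proof -
  have "Poly_Mapping.lookup (f * Poly_Mapping.single x 1) (m + x)
      = (\<Sum>l. Poly_Mapping.lookup f l * (\<Sum>q. Poly_Mapping.lookup (Poly_Mapping.single x 1) q when m + x = l + q))"
    by (rule lookup_mult)
  also have "\<dots> = (\<Sum>l. Poly_Mapping.lookup f l * (1 when m = l))"
  proof -
    have "\<And>l. (\<Sum>q. Poly_Mapping.lookup (Poly_Mapping.single x (1::'b)) q when m + x = l + q) = (1 when m = l)"
    proof -
      fix l
      have "(\<Sum>q. Poly_Mapping.lookup (Poly_Mapping.single x (1::'b)) q when m + x = l + q)
          = (\<Sum>q. (1::'b) when q = x \<and> m = l)"
        by (rule Sum_any.cong) (auto simp: lookup_single when_def)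
      also have "\<dots> = (1 when m = l)"
        by (cases "m = l") (simp_all add: when_def)
      finally show "?thesis l" .
    qed
    then show ?thesis by simp
  qed
  also have "\<dots> = (\<Sum>l. Poly_Mapping.lookup f l when l = m)"
    by (rule Sum_any.cong) (auto simp: when_def)
  also have "\<dots> = Poly_Mapping.lookup f m" by simp
  finally show ?thesis .
qed



lemma ideal_gen_0: "0 \<in> ideal_gen A"
  unfolding ideal_gen_def by (rule CollectI, rule exI[of _ "{}"], auto)

lemma ideal_gen_gen: "a \<in> A \<Longrightarrow> a \<in> ideal_gen A"
  unfolding ideal_gen_def
  by (rule CollectI, rule exI[of _ "{a}"], rule exI[of _ "\<lambda>_. 1"], auto)

lemma ideal_gen_add:
  assumes "x \<in> ideal_gen A" "y \<in> ideal_gen A" shows "x + y \<in> ideal_gen A"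
proof -
  from assms(1) obtain F1 c1 where 1: "x = (\<Sum>a\<in>F1. c1 a * a)" "finite F1" "F1 \<subseteq> A"
    unfolding ideal_gen_def by blast
  from assms(2) obtain F2 c2 where 2: "y = (\<Sum>a\<in>F2. c2 a * a)" "finite F2" "F2 \<subseteq> A"
    unfolding ideal_gen_def by blast
  define c where "c a = (if a \<in> F1 then c1 a else 0) + (if a \<in> F2 then c2 a else 0)" for a
  have "x = (\<Sum>a\<in>F1 \<union> F2. (if a \<in> F1 then c1 a else 0) * a)"
    unfolding 1 by (rule sum.mono_neutral_cong_left) (use 1 2 in auto)
  moreover have "y = (\<Sum>a\<in>F1 \<union> F2. (if a \<in> F2 then c2 a else 0) * a)"
    unfolding 2 by (rule sum.mono_neutral_cong_left) (use 1 2 in auto)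
  ultimately have "x + y = (\<Sum>a\<in>F1 \<union> F2. c a * a)"
    by (simp add: c_def sum.distrib[symmetric] distrib_right)
  then show ?thesis unfolding ideal_gen_def using 1 2 by blast
qed

lemma ideal_gen_mult:
  assumes "x \<in> ideal_gen A" shows "r * x \<in> ideal_gen A"
proof -
  from assms obtain F c where 1: "x = (\<Sum>a\<in>F. c a * a)" "finite F" "F \<subseteq> A"
    unfolding ideal_gen_def by blast
  have "r * x = (\<Sum>a\<in>F. (r * c a) * a)"
    unfolding 1 by (simp add: sum_distrib_left mult.assoc)
  then show ?thesis unfolding ideal_gen_def using 1(2,3) by (intro CollectI exI[of _ F] exI[of _ "\<lambda>a. r * c a"]) auto
qed

lemma ideal_gen_sum:
  "finite I \<Longrightarrow> (\<And>i. i \<in> I \<Longrightarrow> f i \<in> ideal_gen A) \<Longrightarrow> sum f I \<in> ideal_gen A"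
  by (induction I rule: finite_induct) (auto intro: ideal_gen_add ideal_gen_0)

lemma keys_sum_subset:
  "finite I \<Longrightarrow> Poly_Mapping.keys (sum f I) \<subseteq> (\<Union>i\<in>I. Poly_Mapping.keys (f i))"
  by (induction I rule: finite_induct) (use keys_add in fastforce)+

lemma mono_ideal_keys:
  fixes p :: "('a::comm_monoid_add) \<Rightarrow>\<^sub>0 ('b::comm_ring_1)"
  assumes "p \<in> ideal_gen ((\<lambda>g. Poly_Mapping.single g 1) ` G)" "m \<in> Poly_Mapping.keys p"
  shows "\<exists>g\<in>G. \<exists>h. m = g + h"
proof -
  from assms(1) obtain F c where 1: "p = (\<Sum>a\<in>F. c a * a)" "finite F"
     "F \<subseteq> (\<lambda>g. Poly_Mapping.single g 1) ` G"
    unfolding ideal_gen_def by blast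
  from assms(2) 1 keys_sum_subset[of F "\<lambda>a. c a * a"] obtain a where
    a: "a \<in> F" "m \<in> Poly_Mapping.keys (c a * a)" by blast
  from a 1 obtain g where g: "g \<in> G" "a = Poly_Mapping.single g 1" by blast
  from a(2) keys_mult[of "c a" a] g obtain x where "m = x + g"
    by (auto split: if_splits)
  then show ?thesis using g by (metis add.commute)
qed

lemma poly_mapping_sum_singles:
  "p = (\<Sum>m\<in>Poly_Mapping.keys p. Poly_Mapping.single m (Poly_Mapping.lookup p m))"
proof (rule poly_mapping_eqI)
  fix k
  show "Poly_Mapping.lookup p k = Poly_Mapping.lookup (\<Sum>m\<in>Poly_Mapping.keys p. Poly_Mapping.single m (Poly_Mapping.lookup p m)) k"
    by (cases "k \<in> Poly_Mapping.keys p")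
       (simp_all add: lookup_sum lookup_single when_def in_keys_iff)
qed

lemma mono_ideal_intro:
  fixes p :: "('a::comm_monoid_add) \<Rightarrow>\<^sub>0 ('b::comm_ring_1)"
  assumes "\<And>m. m \<in> Poly_Mapping.keys p \<Longrightarrow> \<exists>g\<in>G. \<exists>h. m = g + h"
  shows "p \<in> ideal_gen ((\<lambda>g. Poly_Mapping.single g 1) ` G)"
proof -
  have "Poly_Mapping.single m (Poly_Mapping.lookup p m) \<in> ideal_gen ((\<lambda>g. Poly_Mapping.single g 1) ` G)"
    if "m \<in> Poly_Mapping.keys p" for m
  proof -
    from assms[OF that] obtain g h where gh: "g \<in> G" "m = g + h" by blast
    have "Poly_Mapping.single m (Poly_Mapping.lookup p m)
        = Poly_Mapping.single h (Poly_Mapping.lookup p m) * Poly_Mapping.single g 1"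
      by (simp add: mult_single gh add.commute)
    then show ?thesis using gh by (metis ideal_gen_mult ideal_gen_gen image_eqI)
  qed
  then show ?thesis
    by (subst poly_mapping_sum_singles) (rule ideal_gen_sum, auto)
qed

lemma prod_single:
  "(\<Prod>i\<in>I. Poly_Mapping.single (f i) (1::'b::comm_semiring_1))
     = Poly_Mapping.single (\<Sum>i\<in>I. f i :: 'a::comm_monoid_add) 1"
  by (induction I rule: infinite_finite_induct) (simp_all add: mult_single)



definition mx :: "'v set set \<Rightarrow> 'v \<Rightarrow>\<^sub>0 nat" where
  "mx M = (\<Sum>e\<in>M. \<Sum>v\<in>e. Poly_Mapping.single v 1)"

lemma prod_edge_mono:
  fixes M :: "'v set set"
  shows "(\<Prod>e\<in>M. edge_mono e) = Poly_Mapping.single (mx M) (1::'k::comm_ring_1)"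
proof -
  have "edge_mono e = Poly_Mapping.single (\<Sum>v\<in>e. Poly_Mapping.single v 1) (1::'k)" for e :: "'v set"
    unfolding edge_mono_def var_def by (rule prod_single)
  then have "(\<Prod>e\<in>M. edge_mono e) = (\<Prod>e\<in>M. Poly_Mapping.single (\<Sum>v\<in>e. Poly_Mapping.single v 1) (1::'k))"
    by simp
  then show ?thesis unfolding mx_def by (simp only: prod_single)
qed

lemma gens_eq:
  "{(\<Prod>e\<in>M. edge_mono e) | M. P M} = (\<lambda>g. Poly_Mapping.single g (1::'k::comm_ring_1)) ` {mx M | M. P M}"
  by (auto simp: prod_edge_mono)

lemma lookup_mx:
  fixes M :: "('v::finite) set set"
  shows "Poly_Mapping.lookup (mx M) w = card {e\<in>M. w \<in> e}"
proof -
  have "Poly_Mapping.lookup (mx M) w = (\<Sum>e\<in>M. if w \<in> e then (1::nat) else 0)"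
    unfolding mx_def lookup_sum
  proof (rule sum.cong[OF refl])
    fix e :: "'v set"
    show "(\<Sum>v\<in>e. Poly_Mapping.lookup (Poly_Mapping.single v (1::nat)) w) = (if w \<in> e then 1 else 0)"
      by (simp add: lookup_single when_def)
  qed
  also have "\<dots> = card {e\<in>M. w \<in> e}"
    by (simp add: sum.If_cases) (rule arg_cong[where f=card], auto)
  finally show ?thesis .
qed

lemma lookup_mx_pos:
  fixes M :: "('v::finite) set set"
  assumes "w \<in> \<Union>M" shows "Poly_Mapping.lookup (mx M) w \<ge> 1"
proof -
  have "{e\<in>M. w \<in> e} \<noteq> {}" using assms by auto
  then show ?thesis by (simp add: lookup_mx Suc_le_eq card_gt_0_iff)
qed

lemma lookup_mx_zero:
  fixes M :: "('v::finite) set set"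
  assumes "w \<notin> \<Union>M" shows "Poly_Mapping.lookup (mx M) w = 0"
proof -
  have "{e\<in>M. w \<in> e} = {}" using assms by auto
  then show ?thesis by (simp add: lookup_mx)
qed

lemma lookup_mx_le1:
  fixes M :: "('v::finite) set set"
  assumes "is_matching E M" shows "Poly_Mapping.lookup (mx M) w \<le> 1"
proof -
  have "card {e\<in>M. w \<in> e} \<le> Suc 0"
  proof (subst card_le_Suc0_iff_eq)
    show "\<forall>a\<in>{e\<in>M. w \<in> e}. \<forall>b\<in>{e\<in>M. w \<in> e}. a = b"
      using assms unfolding is_matching_def by blast
  qed simp
  then show ?thesis by (simp add: lookup_mx)
qed

lemma matching_subset: "is_matching E M \<Longrightarrow> N \<subseteq> M \<Longrightarrow> is_matching E N"
  unfolding is_matching_def by blast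

lemma comb:
  fixes E :: "('v::finite) set set" and S :: "'v set"
  assumes N0: "is_matching E N0" "card N0 = 2"
    and k: "3 \<le> k"
    and H: "\<And>N. is_matching E N \<Longrightarrow> card N = 2 \<Longrightarrow>
              \<exists>M. is_matching E M \<and> card M = k \<and> \<Union>M \<subseteq> S \<union> \<Union>N"
  shows "\<exists>M. is_matching E M \<and> card M = k \<and> \<Union>M \<subseteq> S"
proof -
  obtain N where N: "is_matching E N" "card N = 2"
    and Nmin: "\<And>N'. is_matching E N' \<and> card N' = 2 \<Longrightarrow> card (\<Union>N - S) \<le> card (\<Union>N' - S)"
    using ex_has_least_nat[of "\<lambda>N. is_matching E N \<and> card N = 2" N0 "\<lambda>N. card (\<Union>N - S)"] N0
    by blast
  obtain M where M: "is_matching E M" "card M = k" "\<Union>M \<subseteq> S \<union> \<Union>N"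
    using H[OF N] by blast
  show ?thesis
  proof (cases "card (\<Union>N - S) = 0")
    case True
    then have "\<Union>N \<subseteq> S" by simp
    then show ?thesis using M by blast
  next
    case False
    define d where "d = card (\<Union>N - S)"
    from M(2) k have "3 \<le> card M" by simp
    then obtain T where T: "T \<subseteq> M" "card T = 3" by (metis obtain_subset_with_card_n)
    then obtain e1 e2 e3 where e: "T = {e1,e2,e3}" "e1 \<noteq> e2" "e2 \<noteq> e3" "e1 \<noteq> e3"
      by (auto simp: card_3_iff)
    have disj: "a \<inter> b = {}" if "a \<in> M" "b \<in> M" "a \<noteq> b" for a b
      using M(1) that unfolding is_matching_def by blast
    have pair: "d \<le> card (a - S) + card (b - S)" if "a \<in> M" "b \<in> M" "a \<noteq> b" for a b
    proof -
      have "is_matching E {a,b}" using matching_subset[OF M(1)] that by auto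
      moreover have "card {a,b} = 2" using that by auto
      ultimately have "d \<le> card (\<Union>{a,b} - S)" using Nmin d_def by blast
      also have "\<Union>{a,b} - S = (a - S) \<union> (b - S)" by auto
      also have "card \<dots> = card (a - S) + card (b - S)"
        by (rule card_Un_disjoint) (use disj[OF that] in auto)
      finally show ?thesis .
    qed
    have e123: "e1 \<in> M" "e2 \<in> M" "e3 \<in> M" using T e by auto
    have "card (e1 - S) + card (e2 - S) + card (e3 - S) = card ((e1 - S) \<union> (e2 - S) \<union> (e3 - S))"
    proof -
      have "card ((e1 - S) \<union> (e2 - S) \<union> (e3 - S)) = card ((e1 - S) \<union> (e2 - S)) + card (e3 - S)"
        by (rule card_Un_disjoint) (use disj e123 e in auto)
      moreover have "card ((e1 - S) \<union> (e2 - S)) = card (e1 - S) + card (e2 - S)"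
        by (rule card_Un_disjoint) (use disj e123 e in auto)
      ultimately show ?thesis by simp
    qed
    also have "\<dots> \<le> card (\<Union>N - S)"
      by (rule card_mono) (use M(3) e123 in auto)
    finally have "card (e1 - S) + card (e2 - S) + card (e3 - S) \<le> d" unfolding d_def .
    moreover have "d \<le> card (e1 - S) + card (e2 - S)" using pair e123 e by auto
    moreover have "d \<le> card (e2 - S) + card (e3 - S)" using pair e123 e by auto
    moreover have "d \<le> card (e1 - S) + card (e3 - S)" using pair e123 e by auto
    ultimately have "d = 0" by linarith
    then show ?thesis using False d_def by simp
  qed
qed


lemma t1:
  fixes x :: "('v, 'K::field) mpoly"
  assumes x: "x \<in> sqfree_power E k"
  shows "x * g \<in> sqfree_power E k"
proof -
  have "g * x \<in> sqfree_power E k"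
    using x unfolding sqfree_power_def by (rule ideal_gen_mult)
  then show ?thesis by (simp only: mult.commute)
qed

lemma t2:
  fixes E :: "('v::finite) set set"
  assumes "3 \<le> matching_number E"
  obtains N0 where "is_matching E N0" "card N0 = 2"
proof -
  have fin: "finite {card M | M. is_matching E M \<and> finite M}" by simp
  have "card {} \<in> {card M | M. is_matching E M \<and> finite M}"
    unfolding is_matching_def by (intro CollectI exI[of _ "{}"]) auto
  then have "matching_number E \<in> {card M | M. is_matching E M \<and> finite M}"
    unfolding matching_number_def using fin by (intro Max_in) auto
  then obtain M0 where M0: "is_matching E M0" "card M0 = matching_number E"
    by (smt (verit, best) mem_Collect_eq)
  with assms have "2 \<le> card M0" by simp
  then obtain N0 where N0: "N0 \<subseteq> M0" "card N0 = 2" by (metis obtain_subset_with_card_n)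
  have N0m: "is_matching E N0" using matching_subset[OF M0(1) N0(1)] .
  show ?thesis using that N0m N0(2) .
qed
lemma t3:
  fixes N :: "('v::finite) set set" and m :: "'v \<Rightarrow>\<^sub>0 nat"
  assumes sumge: "1 \<le> Poly_Mapping.lookup m w + Poly_Mapping.lookup (mx N) w"
  shows "w \<in> Poly_Mapping.keys m \<union> \<Union>N"
proof (cases "w \<in> \<Union>N")
  case False
  then have "Poly_Mapping.lookup (mx N) w = 0" by (rule lookup_mx_zero)
  with sumge have "Poly_Mapping.lookup m w \<noteq> 0" by linarith
  then have "w \<in> Poly_Mapping.keys m" by (rule lookup_not_eq_zero_eq_in_keys[THEN iffD1])
  then show ?thesis by blast
next
  case True then show ?thesis by blast
qed

lemma t4:
  fixes N M :: "('v::finite) set set" and m h :: "'v \<Rightarrow>\<^sub>0 nat"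
  assumes "m + mx N = mx M + h"
  shows "\<Union>M \<subseteq> Poly_Mapping.keys m \<union> \<Union>N"
proof
  fix w assume w: "w \<in> \<Union>M"
  have "1 \<le> Poly_Mapping.lookup (mx M) w" using lookup_mx_pos[OF w] .
  also have "\<dots> \<le> Poly_Mapping.lookup (mx M + h) w" by (simp add: lookup_add)
  also have "\<dots> = Poly_Mapping.lookup m w + Poly_Mapping.lookup (mx N) w"
    by (simp only: assms[symmetric] lookup_add)
  finally show "w \<in> Poly_Mapping.keys m \<union> \<Union>N" by (rule t3)
qed

lemma t5:
  fixes M :: "('v::finite) set set" and m :: "'v \<Rightarrow>\<^sub>0 nat"
  assumes "is_matching E M" "\<Union>M \<subseteq> Poly_Mapping.keys m"
  shows "m = mx M + (m - mx M)"
proof -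
  have le: "Poly_Mapping.lookup (mx M) w \<le> Poly_Mapping.lookup m w" for w
  proof (cases "w \<in> \<Union>M")
    case True
    then have "w \<in> Poly_Mapping.keys m" using assms(2) by blast
    then have "Poly_Mapping.lookup m w \<noteq> 0" by (rule lookup_not_eq_zero_eq_in_keys[THEN iffD2])
    then show ?thesis using lookup_mx_le1[OF assms(1), of w] by linarith
  next
    case False
    then show ?thesis by (simp add: lookup_mx_zero)
  qed
  show ?thesis
    by (rule poly_mapping_eqI) (simp add: lookup_add lookup_minus le)
qed


lemma sqfree_power_mono:
  "sqfree_power E k = ideal_gen ((\<lambda>g. Poly_Mapping.single g (1::'k::comm_ring_1)) ` {mx M | M. is_matching E M \<and> card M = k})"
  unfolding sqfree_power_def by (simp only: gens_eq)

theorem theorem6p2: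
  fixes E :: "('v::finite) set set" and k :: nat
  assumes "simple_graph E"
    and "no_isolated_vertex E"
    and "2 < k" and "k \<le> matching_number E"
  shows "colon_ideal (sqfree_power E k :: ('v, 'K::field) mpoly set) (sqfree_power E 2)
         = sqfree_power E k"
proof
  show "sqfree_power E k \<subseteq> colon_ideal (sqfree_power E k :: ('v, 'K::field) mpoly set) (sqfree_power E 2)"
    unfolding colon_ideal_def using t1 by blast
next
  have "3 \<le> matching_number E" using assms(3,4) by simp
  then obtain N0 where N0m: "is_matching E N0" and N02: "card N0 = 2" by (rule t2)
  show "colon_ideal (sqfree_power E k :: ('v, 'K::field) mpoly set) (sqfree_power E 2) \<subseteq> sqfree_power E k"
  proof
    fix f :: "('v, 'K) mpoly"
    assume f: "f \<in> colon_ideal (sqfree_power E k) (sqfree_power E 2)"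
    show "f \<in> sqfree_power E k"
      unfolding sqfree_power_mono
    proof (rule mono_ideal_intro)
      fix m assume m: "m \<in> Poly_Mapping.keys f"
      have H: "\<exists>M. is_matching E M \<and> card M = k \<and> \<Union>M \<subseteq> Poly_Mapping.keys m \<union> \<Union>N"
        if N: "is_matching E N" "card N = 2" for N
      proof -
        have "Poly_Mapping.single (mx N) 1 \<in> (sqfree_power E 2 :: ('v, 'K) mpoly set)"
          unfolding sqfree_power_mono using N by (intro ideal_gen_gen) blast
        then have "f * Poly_Mapping.single (mx N) 1 \<in> (sqfree_power E k :: ('v, 'K) mpoly set)"
          using f unfolding colon_ideal_def by blast
        moreover have "m + mx N \<in> Poly_Mapping.keys (f * Poly_Mapping.single (mx N) 1)"
          using m unfolding in_keys_iff lookup_mult_single_shift .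
        ultimately have "\<exists>g\<in>{mx M | M. is_matching E M \<and> card M = k}. \<exists>h. m + mx N = g + h"
          unfolding sqfree_power_mono by (rule mono_ideal_keys)
        then obtain g h where g: "g \<in> {mx M | M. is_matching E M \<and> card M = k}" and gh: "m + mx N = g + h"
          by (elim bexE exE)
        from g obtain M where M: "is_matching E M" "card M = k" "g = mx M"
          by (elim CollectE exE conjE) simp
        from gh M(3) have Mh: "m + mx N = mx M + h" by simp
        then show ?thesis using t4[OF Mh] M(1,2) by blast
      qed
      obtain M where M: "is_matching E M" "card M = k" "\<Union>M \<subseteq> Poly_Mapping.keys m"
      proof -
        have k3: "3 \<le> k" using assms(3) by simp
        show ?thesis using comb[OF N0m N02 k3 H] that by blast
      qed
      then show "\<exists>g\<in>{mx M | M. is_matching E M \<and> card M = k}. \<exists>h. m = g + h"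
        using t5[OF M(1) M(3)] by blast
    qed
  qed
qed

end
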